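(* Let $G$ be a finitely generated group and suppose there exists an automorphism $f$ of $G$ whose subgroup of fixed points is not finitely generated. Then for every integer $n\geq 1$ there exist finitely generated subgroups $H_1,\dots,H_n\leq G^n$ such that $\bigcap_{i\in I}H_i$ is finitely generated for every proper non-empty subset $I\subsetneq\{1,\dots,n\}$, but $\bigcap_{i=1}^n H_i$ is not finitely generated.
   Context: $G^n$ denotes the direct product of $n$ copies of $G$. *)

theory Defs
  imports "HOL-Algebra.Algebra"
begin

definition fg_subgroup :: "('a, 'b) monoid_scheme \<Rightarrow> 'a set \<Rightarrow> bool" where
  "fg_subgroup G H \<longleftrightarrow> (\<exists>S. finite S \<and> S \<subseteq> carrier G \<and> H = generate G S)"

definition fg_group :: "('a, 'b) monoid_scheme \<Rightarrow> bool" where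
  "fg_group G \<longleftrightarrow> fg_subgroup G (carrier G)"

definition DirPow :: "('a, 'b) monoid_scheme \<Rightarrow> nat \<Rightarrow> ('a list) monoid" where
  "DirPow G n = DirProd_list (replicate n G)"

end

theory Submission imports Defs begin

lemma DirPow_carrier:
  "carrier (DirPow G n) = {x. length x = n \<and> (\<forall>k<n. x!k \<in> carrier G)}"
  unfolding DirPow_def
  using DirProd_list_carrier_mem[of _ "replicate n G"] DirProd_list_carrier_memI[of _ "replicate n G"]
  by auto

lemma DirPow_Suc:
  "DirPow G (Suc n) = image_group (\<lambda>(x, xs). x # xs) (G \<times>\<times> DirPow G n)"
  unfolding DirPow_def DirProd_list_def by simp

lemma DirPow_one: "\<one>\<^bsub>DirPow G n\<^esub> = replicate n \<one>\<^bsub>G\<^esub>"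
  unfolding DirPow_def DirProd_list_one by (induct n) auto

lemma DirPow_group: "group G \<Longrightarrow> group (DirPow G n)"
  unfolding DirPow_def by (rule DirProd_list_is_group) simp

lemma DirPow_mult:
  assumes "x \<in> carrier (DirPow G n)" "y \<in> carrier (DirPow G n)"
  shows "x \<otimes>\<^bsub>DirPow G n\<^esub> y = map (\<lambda>k. x!k \<otimes>\<^bsub>G\<^esub> y!k) [0..<n]"
  using assms
proof (induct n arbitrary: x y)
  case 0
  then show ?case by (simp add: DirPow_def DirProd_list_def)
next
  case (Suc n)
  from Suc.prems obtain a as where x: "x = a # as" and a: "a \<in> carrier G" and as: "as \<in> carrier (DirPow G n)"
    unfolding DirPow_carrier by (cases x) (auto, fastforce)
  from Suc.prems obtain b bs where y: "y = b # bs" and b: "b \<in> carrier G" and bs: "bs \<in> carrier (DirPow G n)"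
    unfolding DirPow_carrier by (cases y) (auto, fastforce)
  have inj: "inj_on (\<lambda>(x, xs). x # xs) (carrier (G \<times>\<times> DirPow G n))"
    by (auto simp: inj_on_def)
  have i1: "inv_into (carrier G \<times> carrier (DirPow G n)) (\<lambda>(x, xs). x # xs) (a # as) = (a, as)"
    using inv_into_f_f[OF inj, of "(a, as)"] a as by (simp add: DirProd_def)
  have i2: "inv_into (carrier G \<times> carrier (DirPow G n)) (\<lambda>(x, xs). x # xs) (b # bs) = (b, bs)"
    using inv_into_f_f[OF inj, of "(b, bs)"] b bs by (simp add: DirProd_def)
  have "x \<otimes>\<^bsub>DirPow G (Suc n)\<^esub> y = (a \<otimes>\<^bsub>G\<^esub> b) # (as \<otimes>\<^bsub>DirPow G n\<^esub> bs)"
    unfolding DirPow_Suc x y image_group_def by (simp add: i1 i2 DirProd_def)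
  also have "\<dots> = map (\<lambda>k. x!k \<otimes>\<^bsub>G\<^esub> y!k) [0..<Suc n]"
    using Suc.hyps[OF as bs] unfolding x y by (simp add: map_upt_Suc del: upt_Suc)
  finally show ?case .
qed

lemma DirPow_homI:
  assumes "group G"
    and c: "\<And>x. x \<in> carrier (DirPow G n) \<Longrightarrow> \<phi> x \<in> carrier (DirPow G n)"
    and m: "\<And>x y k. x \<in> carrier (DirPow G n) \<Longrightarrow> y \<in> carrier (DirPow G n) \<Longrightarrow> k < n \<Longrightarrow>
              \<phi> (map (\<lambda>k. x!k \<otimes>\<^bsub>G\<^esub> y!k) [0..<n]) ! k = \<phi> x ! k \<otimes>\<^bsub>G\<^esub> \<phi> y ! k"
  shows "\<phi> \<in> hom (DirPow G n) (DirPow G n)"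
proof (rule homI)
  fix x assume "x \<in> carrier (DirPow G n)" then show "\<phi> x \<in> carrier (DirPow G n)" by (rule c)
next
  fix x y assume x: "x \<in> carrier (DirPow G n)" and y: "y \<in> carrier (DirPow G n)"
  have mxy: "x \<otimes>\<^bsub>DirPow G n\<^esub> y \<in> carrier (DirPow G n)"
    using DirPow_group[OF assms(1)] x y by (simp add: group.is_monoid monoid.m_closed)
  show "\<phi> (x \<otimes>\<^bsub>DirPow G n\<^esub> y) = \<phi> x \<otimes>\<^bsub>DirPow G n\<^esub> \<phi> y"
    unfolding DirPow_mult[OF x y] DirPow_mult[OF c[OF x] c[OF y]]
  proof (rule nth_equalityI)
    show "length (\<phi> (map (\<lambda>k. x ! k \<otimes>\<^bsub>G\<^esub> y ! k) [0..<n])) = length (map (\<lambda>k. \<phi> x ! k \<otimes>\<^bsub>G\<^esub> \<phi> y ! k) [0..<n])"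
      using c[OF mxy] unfolding DirPow_mult[OF x y] DirPow_carrier by simp
    fix k assume "k < length (\<phi> (map (\<lambda>k. x ! k \<otimes>\<^bsub>G\<^esub> y ! k) [0..<n]))"
    then have "k < n" using c[OF mxy] unfolding DirPow_mult[OF x y] DirPow_carrier by simp
    then show "\<phi> (map (\<lambda>k. x ! k \<otimes>\<^bsub>G\<^esub> y ! k) [0..<n]) ! k = map (\<lambda>k. \<phi> x ! k \<otimes>\<^bsub>G\<^esub> \<phi> y ! k) [0..<n] ! k"
      using m[OF x y] by simp
  qed
qed

lemma fg_DirPow:
  assumes G: "group G" and fg: "fg_group G"
  shows "\<exists>S. finite S \<and> S \<subseteq> carrier (DirPow G n) \<and> generate (DirPow G n) S = carrier (DirPow G n)"
proof -
  interpret G: group G by (rule G)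
  interpret P: group "DirPow G n" by (rule DirPow_group[OF G])
  obtain T where T: "finite T" "T \<subseteq> carrier G" "carrier G = generate G T"
    using fg unfolding fg_group_def fg_subgroup_def by blast
  define e where "e = (\<lambda>i t. map (\<lambda>k. if k = i then t else \<one>\<^bsub>G\<^esub>) [0..<n])"
  define S where "S = (\<Union>i<n. e i ` T)"
  have ec: "e i t \<in> carrier (DirPow G n)" if "t \<in> carrier G" for i t
    using that unfolding e_def DirPow_carrier by auto
  have SC: "S \<subseteq> carrier (DirPow G n)" unfolding S_def using T(2) ec by blast
  have ehom: "e i \<in> hom G (DirPow G n)" for i
  proof (rule homI)
    fix x assume "x \<in> carrier G" then show "e i x \<in> carrier (DirPow G n)" by (rule ec)
  next
    fix x y assume x: "x \<in> carrier G" and y: "y \<in> carrier G"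
    show "e i (x \<otimes>\<^bsub>G\<^esub> y) = e i x \<otimes>\<^bsub>DirPow G n\<^esub> e i y"
      unfolding DirPow_mult[OF ec[OF x] ec[OF y]] by (auto simp: e_def)
  qed
  have ein: "e i t \<in> generate (DirPow G n) S" if "i < n" "t \<in> carrier G" for i t
  proof -
    interpret h: group_hom G "DirPow G n" "e i"
      by (unfold_locales) (rule ehom)
    have "e i t \<in> e i ` generate G T" using that T(3) by auto
    also have "\<dots> = generate (DirPow G n) (e i ` T)" using h.generate_img[OF T(2)] by simp
    also have "\<dots> \<subseteq> generate (DirPow G n) S"
      by (rule P.mono_generate) (use \<open>i < n\<close> in \<open>auto simp: S_def\<close>)
    finally show ?thesis .
  qed
  have "x \<in> generate (DirPow G n) S" if x: "x \<in> carrier (DirPow G n)" for x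
  proof -
    define pre where "pre = (\<lambda>m. map (\<lambda>j. if j < m then x!j else \<one>\<^bsub>G\<^esub>) [0..<n])"
    have pc: "pre m \<in> carrier (DirPow G n)" for m
      using x unfolding pre_def DirPow_carrier by auto
    have "m \<le> n \<Longrightarrow> pre m \<in> generate (DirPow G n) S" for m
    proof (induct m)
      case 0
      have "pre 0 = \<one>\<^bsub>DirPow G n\<^esub>" unfolding pre_def DirPow_one
        by (simp add: map_replicate_const)
      then show ?case using generate.one by metis
    next
      case (Suc m)
      have xm: "x!m \<in> carrier G" using x Suc.prems unfolding DirPow_carrier by auto
      have "pre (Suc m) = pre m \<otimes>\<^bsub>DirPow G n\<^esub> e m (x!m)"
        unfolding DirPow_mult[OF pc ec[OF xm]]
        using x Suc.prems unfolding pre_def e_def DirPow_carrier by auto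
      moreover have "pre m \<in> generate (DirPow G n) S" using Suc by simp
      moreover have "e m (x!m) \<in> generate (DirPow G n) S" using ein Suc.prems xm by simp
      ultimately show ?case using generate.eng by metis
    qed
    moreover have "pre n = x" using x unfolding pre_def DirPow_carrier
      by (auto intro: nth_equalityI)
    ultimately show ?thesis by (metis order_refl)
  qed
  then have "generate (DirPow G n) S = carrier (DirPow G n)"
    using P.generate_in_carrier[OF SC] by blast
  moreover have "finite S" unfolding S_def using T(1) by simp
  ultimately show ?thesis using SC by blast
qed

lemma fg_image:
  assumes G: "group G" and fg: "fg_group G" and h: "\<phi> \<in> hom (DirPow G n) (DirPow G n)"
  shows "fg_subgroup (DirPow G n) (\<phi> ` carrier (DirPow G n))"
    and "subgroup (\<phi> ` carrier (DirPow G n)) (DirPow G n)"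
proof -
  interpret P: group "DirPow G n" by (rule DirPow_group[OF G])
  interpret h: group_hom "DirPow G n" "DirPow G n" \<phi>
    by unfold_locales (rule h)
  obtain S where S: "finite S" "S \<subseteq> carrier (DirPow G n)" "generate (DirPow G n) S = carrier (DirPow G n)"
    using fg_DirPow[OF G fg] by blast
  have eq: "\<phi> ` carrier (DirPow G n) = generate (DirPow G n) (\<phi> ` S)"
    using h.generate_img[OF S(2)] S(3) by simp
  have "\<phi> ` S \<subseteq> carrier (DirPow G n)" using S(2) h.hom_closed by blast
  then show "fg_subgroup (DirPow G n) (\<phi> ` carrier (DirPow G n))"
    unfolding fg_subgroup_def eq using S(1) by blast
  show "subgroup (\<phi> ` carrier (DirPow G n)) (DirPow G n)"
    using h.img_is_subgroup .
qed

definition Hc :: "('a, 'b) monoid_scheme \<Rightarrow> ('a \<Rightarrow> 'a) \<Rightarrow> nat \<Rightarrow> nat \<Rightarrow> 'a list set" where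
  "Hc G f n i = {x \<in> carrier (DirPow G n). if i < n then x!(i-1) = x!i else x!(n-1) = f (x!0)}"

fun rt :: "nat set \<Rightarrow> nat \<Rightarrow> nat" where
  "rt I 0 = 0"
| "rt I (Suc k) = (if Suc k \<in> I then rt I k else Suc k)"

lemma rt_le: "rt I k \<le> k"
  by (induct k) auto

lemma base_case:
  assumes G: "group G" and I: "I \<subseteq> {1..<n}" "I \<noteq> {}"
  shows "\<exists>\<phi>. \<phi> \<in> hom (DirPow G n) (DirPow G n) \<and> (\<Inter>i\<in>I. Hc G f n i) = \<phi> ` carrier (DirPow G n)"
proof -
  define \<phi> where "\<phi> = (\<lambda>y::'a list. map (\<lambda>k. y ! rt I k) [0..<n])"
  have c: "\<phi> y \<in> carrier (DirPow G n)" if "y \<in> carrier (DirPow G n)" for y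
    using that rt_le unfolding \<phi>_def DirPow_carrier by (auto intro: le_less_trans)
  have h: "\<phi> \<in> hom (DirPow G n) (DirPow G n)"
    by (rule DirPow_homI[OF G c]) (simp_all add: \<phi>_def le_less_trans[OF rt_le])
  have "(\<Inter>i\<in>I. Hc G f n i) = \<phi> ` carrier (DirPow G n)"
  proof
    show "(\<Inter>i\<in>I. Hc G f n i) \<subseteq> \<phi> ` carrier (DirPow G n)"
    proof
      fix x assume x: "x \<in> (\<Inter>i\<in>I. Hc G f n i)"
      then have xc: "x \<in> carrier (DirPow G n)" using I unfolding Hc_def by auto
      have e: "k < n \<Longrightarrow> x ! rt I k = x ! k" for k
      proof (induct k)
        case (Suc k)
        show ?case
        proof (cases "Suc k \<in> I")
          case True
          then have "x \<in> Hc G f n (Suc k)" using x by blast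
          then have "x ! k = x ! Suc k" using Suc.prems unfolding Hc_def by simp
          then show ?thesis using Suc True by simp
        qed simp
      qed simp
      have "\<phi> x = x" unfolding \<phi>_def using xc e unfolding DirPow_carrier
        by (auto intro: nth_equalityI)
      then show "x \<in> \<phi> ` carrier (DirPow G n)" using xc by (metis image_eqI)
    qed
  next
    show "\<phi> ` carrier (DirPow G n) \<subseteq> (\<Inter>i\<in>I. Hc G f n i)"
    proof clarify
      fix y i assume y: "y \<in> carrier (DirPow G n)" and i: "i \<in> I"
      then obtain k where k: "i = Suc k" "Suc k < n" using I by (cases i) auto
      show "\<phi> y \<in> Hc G f n i" unfolding Hc_def using c[OF y] k i
        by (simp add: \<phi>_def nth_append del: upt_Suc)
    qed
  qed
  then show ?thesis using h by blast
qed

definition sig :: "nat \<Rightarrow> nat \<Rightarrow> nat" where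
  "sig n i = (if i = 1 then n else i - 1)"

definition sig' :: "nat \<Rightarrow> nat \<Rightarrow> nat" where
  "sig' n j = (if j = n then 1 else j + 1)"

lemma rotation_step:
  assumes G: "group G" and f: "f \<in> iso G G" and n: "n \<ge> 2"
    and I: "I \<subseteq> {1..n}" "I \<noteq> {}"
    and h: "\<phi> \<in> hom (DirPow G n) (DirPow G n)" and K: "(\<Inter>i\<in>I. Hc G f n i) = \<phi> ` carrier (DirPow G n)"
  shows "\<exists>\<psi>. \<psi> \<in> hom (DirPow G n) (DirPow G n) \<and> (\<Inter>i\<in>sig n ` I. Hc G f n i) = \<psi> ` carrier (DirPow G n)"
proof -
  interpret G: group G by (rule G)
  have fh: "f \<in> hom G G" and fb: "bij_betw f (carrier G) (carrier G)" using f unfolding iso_def by simp_all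
  have fc: "f x \<in> carrier G" if "x \<in> carrier G" for x using fh that by (rule hom_in_carrier)
  have fm: "f (x \<otimes>\<^bsub>G\<^esub> y) = f x \<otimes>\<^bsub>G\<^esub> f y" if "x \<in> carrier G" "y \<in> carrier G" for x y
    using fh that by (simp add: hom_def)
  have finj: "inj_on f (carrier G)" using fb by (simp add: bij_betw_def)
  have fsurj: "f ` carrier G = carrier G" using fb by (simp add: bij_betw_def)
  define \<rho> where "\<rho> = (\<lambda>x::'a list. map (\<lambda>k. if k < n - 1 then x ! Suc k else f (x ! 0)) [0..<n])"
  have rc: "\<rho> x \<in> carrier (DirPow G n)" if "x \<in> carrier (DirPow G n)" for x
    using that n fc unfolding \<rho>_def DirPow_carrier by auto
  have rh: "\<rho> \<in> hom (DirPow G n) (DirPow G n)"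
  proof (rule DirPow_homI[OF G rc])
    fix x y k assume x: "x \<in> carrier (DirPow G n)" and y: "y \<in> carrier (DirPow G n)" and k: "k < n"
    show "\<rho> (map (\<lambda>k. x ! k \<otimes>\<^bsub>G\<^esub> y ! k) [0..<n]) ! k = \<rho> x ! k \<otimes>\<^bsub>G\<^esub> \<rho> y ! k"
      using x y k n fm unfolding \<rho>_def DirPow_carrier by auto
  qed
  have rsurj: "\<exists>x \<in> carrier (DirPow G n). y = \<rho> x" if y: "y \<in> carrier (DirPow G n)" for y
  proof -
    define x where "x = map (\<lambda>k. if k = 0 then inv_into (carrier G) f (y ! (n-1)) else y ! (k-1)) [0..<n]"
    have yl: "y ! (n-1) \<in> carrier G" using y n unfolding DirPow_carrier by auto
    have xc: "x \<in> carrier (DirPow G n)" using y n unfolding x_def DirPow_carrier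
      using inv_into_into[of "y ! (n-1)" f "carrier G"] yl fsurj by auto
    have fi: "f (inv_into (carrier G) f (y!(n-1))) = y!(n-1)" using yl fsurj by (simp add: f_inv_into_f)
    have "\<rho> x = y"
    proof (rule nth_equalityI)
      show "length (\<rho> x) = length y" using y unfolding \<rho>_def DirPow_carrier by simp
      fix k assume "k < length (\<rho> x)"
      then have k: "k < n" unfolding \<rho>_def by simp
      show "\<rho> x ! k = y ! k"
      proof (cases "k < n - 1")
        case True then show ?thesis using k unfolding \<rho>_def x_def by simp
      next
        case False then have "k = n - 1" using k by simp
        then show ?thesis using k n fi unfolding \<rho>_def x_def by simp
      qed
    qed
    then show ?thesis using xc by blast
  qed
  have rinj: "x = x'" if x: "x \<in> carrier (DirPow G n)" and x': "x' \<in> carrier (DirPow G n)" and e: "\<rho> x = \<rho> x'" for x x'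
  proof (rule nth_equalityI)
    show "length x = length x'" using x x' unfolding DirPow_carrier by auto
    fix k assume "k < length x"
    then have k: "k < n" using x unfolding DirPow_carrier by auto
    show "x ! k = x' ! k"
    proof (cases k)
      case 0
      have "\<rho> x ! (n-1) = \<rho> x' ! (n-1)" using e by simp
      then have "f (x!0) = f (x'!0)" using n unfolding \<rho>_def by simp
      moreover have "x!0 \<in> carrier G" "x'!0 \<in> carrier G" using x x' n unfolding DirPow_carrier by auto
      ultimately show ?thesis using finj 0 unfolding inj_on_def by blast
    next
      case (Suc j)
      have "\<rho> x ! j = \<rho> x' ! j" using e by simp
      moreover have "j < n - 1" "j < n" using k Suc by auto
      ultimately show ?thesis using Suc unfolding \<rho>_def by simp
    qed
  qed
  have key: "x \<in> Hc G f n i \<longleftrightarrow> \<rho> x \<in> Hc G f n (sig n i)" if x: "x \<in> carrier (DirPow G n)" and i: "i \<in> {1..n}" for x i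
  proof -
    have x0: "x!0 \<in> carrier G" "x!1 \<in> carrier G" using x n unfolding DirPow_carrier by auto
    consider "i = 1" | "1 < i" "i < n" | "i = n" using i n by force
    then show ?thesis
    proof cases
      case 1
      have r0: "\<rho> x ! 0 = x ! 1" using n unfolding \<rho>_def by simp
      have rl: "\<rho> x ! (n-1) = f (x!0)" using n unfolding \<rho>_def by simp
      have "x!0 = x!1 \<longleftrightarrow> f (x!0) = f (x!1)" using finj x0 by (simp add: inj_on_eq_iff)
      then show ?thesis using 1 n x rc[OF x] r0 rl unfolding Hc_def sig_def by simp
    next
      case 2
      define m where "m = i - 2"
      have m: "i = Suc (Suc m)" using 2 unfolding m_def by arith
      have "m < n - 1" "Suc m < n - 1" "m < n" "Suc m < n" using 2 m by arith+
      then have r1: "\<rho> x ! m = x ! Suc m" and r2: "\<rho> x ! Suc m = x ! Suc (Suc m)"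
        unfolding \<rho>_def by simp_all
      have "x \<in> Hc G f n i \<longleftrightarrow> x ! Suc m = x ! Suc (Suc m)" using 2 m x unfolding Hc_def by simp
      moreover have "\<rho> x \<in> Hc G f n (sig n i) \<longleftrightarrow> \<rho> x ! m = \<rho> x ! Suc m"
        using 2 m rc[OF x] unfolding Hc_def sig_def by simp
      ultimately show ?thesis using r1 r2 by simp
    next
      case 3
      define p where "p = n - 2"
      have p: "n = Suc (Suc p)" using n unfolding p_def by arith
      have "p < n - 1" "p < n" "Suc p < n" "\<not> Suc p < n - 1" using p by arith+
      then have r1: "\<rho> x ! p = x ! Suc p" and rl: "\<rho> x ! Suc p = f (x!0)"
        unfolding \<rho>_def by (simp_all del: upt_Suc)
      have "x \<in> Hc G f n i \<longleftrightarrow> x ! Suc p = f (x!0)" using 3 p x unfolding Hc_def by simp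
      moreover have "\<rho> x \<in> Hc G f n (sig n i) \<longleftrightarrow> \<rho> x ! p = \<rho> x ! Suc p"
        using 3 p rc[OF x] unfolding Hc_def sig_def by simp
      ultimately show ?thesis using r1 rl by simp
    qed
  qed
  have sI: "sig n ` I \<noteq> {}" using I by blast
  have "(\<Inter>i\<in>sig n ` I. Hc G f n i) = \<rho> ` (\<Inter>i\<in>I. Hc G f n i)"
  proof
    show "\<rho> ` (\<Inter>i\<in>I. Hc G f n i) \<subseteq> (\<Inter>i\<in>sig n ` I. Hc G f n i)"
    proof clarify
      fix x i assume x: "x \<in> (\<Inter>i\<in>I. Hc G f n i)" and i: "i \<in> I"
      then have xc: "x \<in> carrier (DirPow G n)" unfolding Hc_def by auto
      show "\<rho> x \<in> Hc G f n (sig n i)" using key[OF xc] x i I by blast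
    qed
  next
    show "(\<Inter>i\<in>sig n ` I. Hc G f n i) \<subseteq> \<rho> ` (\<Inter>i\<in>I. Hc G f n i)"
    proof
      fix y assume y: "y \<in> (\<Inter>i\<in>sig n ` I. Hc G f n i)"
      then have yc: "y \<in> carrier (DirPow G n)" using sI unfolding Hc_def by auto
      obtain x where xc: "x \<in> carrier (DirPow G n)" and yx: "y = \<rho> x" using rsurj[OF yc] by blast
      have "x \<in> (\<Inter>i\<in>I. Hc G f n i)" using key[OF xc] y yx I by blast
      then show "y \<in> \<rho> ` (\<Inter>i\<in>I. Hc G f n i)" using yx by blast
    qed
  qed
  also have "\<dots> = (\<rho> \<circ> \<phi>) ` carrier (DirPow G n)" unfolding K by (simp add: image_comp)
  finally show ?thesis using hom_compose[OF h rh] by blast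
qed

lemma proper_case:
  assumes G: "group G" and f: "f \<in> iso G G" and n: "n \<ge> 2"
  shows "m < n \<Longrightarrow> J \<subseteq> {1..n} \<Longrightarrow> J \<noteq> {} \<Longrightarrow> n - m \<notin> J \<Longrightarrow>
    \<exists>\<phi>. \<phi> \<in> hom (DirPow G n) (DirPow G n) \<and> (\<Inter>i\<in>J. Hc G f n i) = \<phi> ` carrier (DirPow G n)"
proof (induct m arbitrary: J)
  case 0
  then have "J \<subseteq> {1..<n}" by (auto simp: subset_iff le_less)
  then show ?case using base_case[OF G _ 0(3)] by blast
next
  case (Suc m)
  define I where "I = sig' n ` J"
  have I1: "I \<subseteq> {1..n}" using Suc.prems n unfolding I_def sig'_def by auto
  have I2: "I \<noteq> {}" using Suc.prems unfolding I_def by blast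
  have I3: "n - m \<notin> I"
  proof
    assume "n - m \<in> I"
    then obtain j where j: "j \<in> J" "sig' n j = n - m" unfolding I_def by (metis imageE)
    show False
    proof (cases "j = n")
      case True then show False using j Suc.prems unfolding sig'_def by simp
    next
      case False
      then have "j = n - Suc m" using j unfolding sig'_def by simp
      then show False using j Suc.prems by simp
    qed
  qed
  have sJ: "sig n ` I = J"
  proof -
    have "sig n (sig' n j) = j" if "j \<in> J" for j
      using that Suc.prems unfolding sig_def sig'_def by auto
    then show ?thesis unfolding I_def image_comp by (simp add: o_def)
  qed
  obtain \<phi> where "\<phi> \<in> hom (DirPow G n) (DirPow G n)" "(\<Inter>i\<in>I. Hc G f n i) = \<phi> ` carrier (DirPow G n)"
    using Suc.hyps[OF _ I1 I2 I3] Suc.prems by auto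
  from rotation_step[OF G f n I1 I2 this] show ?case unfolding sJ .
qed

theorem lemma2p4:
  fixes G :: "('a, 'b) monoid_scheme" and f :: "'a \<Rightarrow> 'a" and n :: nat
  assumes "group G"
    and "fg_group G"
    and "f \<in> iso G G"
    and "\<not> fg_subgroup G {x \<in> carrier G. f x = x}"
    and "n \<ge> 2"
  shows "\<exists>H :: nat \<Rightarrow> 'a list set.
           (\<forall>i \<in> {1..n}. subgroup (H i) (DirPow G n) \<and> fg_subgroup (DirPow G n) (H i))
         \<and> (\<forall>I. I \<subseteq> {1..n} \<and> I \<noteq> {} \<and> I \<noteq> {1..n} \<longrightarrow> fg_subgroup (DirPow G n) (\<Inter>i\<in>I. H i))
         \<and> \<not> fg_subgroup (DirPow G n) (\<Inter>i\<in>{1..n}. H i)"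
proof -
  note G = assms(1) and fg = assms(2) and f = assms(3) and nfix = assms(4) and n = assms(5)
  have proper: "\<exists>\<phi>. \<phi> \<in> hom (DirPow G n) (DirPow G n) \<and> (\<Inter>i\<in>I. Hc G f n i) = \<phi> ` carrier (DirPow G n)"
    if I: "I \<subseteq> {1..n}" "I \<noteq> {}" "I \<noteq> {1..n}" for I
  proof -
    obtain j where j: "j \<in> {1..n}" "j \<notin> I" using I by blast
    have "n - (n - j) = j" using j by auto
    then show ?thesis using proper_case[OF G f n, of "n - j" I] j I by auto
  qed
  have P1: "subgroup (Hc G f n i) (DirPow G n) \<and> fg_subgroup (DirPow G n) (Hc G f n i)" if i: "i \<in> {1..n}" for i
  proof -
    have "{i} \<noteq> {1..n}"
    proof
      assume a: "{i} = {1..n}"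
      have "1 \<in> {1..n}" "2 \<in> {1..n}" using n by auto
      then show False unfolding a[symmetric] by simp
    qed
    then obtain \<phi> where "\<phi> \<in> hom (DirPow G n) (DirPow G n)" "(\<Inter>i\<in>{i}. Hc G f n i) = \<phi> ` carrier (DirPow G n)"
      using proper[of "{i}"] i by auto
    then show ?thesis using fg_image[OF G fg] by simp
  qed
  have P2: "fg_subgroup (DirPow G n) (\<Inter>i\<in>I. Hc G f n i)"
    if "I \<subseteq> {1..n} \<and> I \<noteq> {} \<and> I \<noteq> {1..n}" for I
    using proper[of I] that fg_image[OF G fg] by auto
  have P3: "\<not> fg_subgroup (DirPow G n) (\<Inter>i\<in>{1..n}. Hc G f n i)"
  proof
    assume "fg_subgroup (DirPow G n) (\<Inter>i\<in>{1..n}. Hc G f n i)"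
    then obtain S where S: "finite S" "S \<subseteq> carrier (DirPow G n)" "(\<Inter>i\<in>{1..n}. Hc G f n i) = generate (DirPow G n) S"
      unfolding fg_subgroup_def by blast
    interpret Gg: group G by (rule G)
    interpret P: group "DirPow G n" by (rule DirPow_group[OF G])
    define \<pi> where "\<pi> = (\<lambda>x::'a list. x ! 0)"
    have ph: "\<pi> \<in> hom (DirPow G n) G"
    proof (rule homI)
      fix x assume "x \<in> carrier (DirPow G n)" then show "\<pi> x \<in> carrier G"
        using n unfolding \<pi>_def DirPow_carrier by auto
    next
      fix x y assume x: "x \<in> carrier (DirPow G n)" and y: "y \<in> carrier (DirPow G n)"
      show "\<pi> (x \<otimes>\<^bsub>DirPow G n\<^esub> y) = \<pi> x \<otimes>\<^bsub>G\<^esub> \<pi> y"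
        using n unfolding \<pi>_def DirPow_mult[OF x y] by simp
    qed
    interpret h: group_hom "DirPow G n" G \<pi> by unfold_locales (rule ph)
    have "\<pi> ` (\<Inter>i\<in>{1..n}. Hc G f n i) = {x \<in> carrier G. f x = x}"
    proof
      show "\<pi> ` (\<Inter>i\<in>{1..n}. Hc G f n i) \<subseteq> {x \<in> carrier G. f x = x}"
      proof clarify
        fix x assume x: "x \<in> (\<Inter>i\<in>{1..n}. Hc G f n i)"
        have "x \<in> Hc G f n 1" using x n by auto
        then have xc: "x \<in> carrier (DirPow G n)" unfolding Hc_def by auto
        have eq: "k < n \<Longrightarrow> x ! k = x ! 0" for k
        proof (induct k)
          case (Suc k)
          have "x \<in> Hc G f n (Suc k)" using x Suc.prems by auto
          then show ?case using Suc unfolding Hc_def by simp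
        qed simp
        have "x \<in> Hc G f n n" using x n by auto
        then have "x ! (n-1) = f (x!0)" unfolding Hc_def by simp
        then have "f (x!0) = x!0" using eq[of "n-1"] n by simp
        moreover have "x!0 \<in> carrier G" using xc n unfolding DirPow_carrier by auto
        ultimately show "\<pi> x \<in> carrier G \<and> f (\<pi> x) = \<pi> x" unfolding \<pi>_def by auto
      qed
    next
      show "{x \<in> carrier G. f x = x} \<subseteq> \<pi> ` (\<Inter>i\<in>{1..n}. Hc G f n i)"
      proof clarify
        fix g assume g: "g \<in> carrier G" "f g = g"
        have "replicate n g \<in> Hc G f n i" if "i \<in> {1..n}" for i
          using g n that unfolding Hc_def DirPow_carrier by auto
        then have "replicate n g \<in> (\<Inter>i\<in>{1..n}. Hc G f n i)" by (rule INT_I)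
        moreover have "\<pi> (replicate n g) = g" using n unfolding \<pi>_def by simp
        ultimately show "g \<in> \<pi> ` (\<Inter>i\<in>{1..n}. Hc G f n i)" by (metis image_eqI)
      qed
    qed
    then have e1: "{x \<in> carrier G. f x = x} = generate G (\<pi> ` S)"
      using h.generate_img[OF S(2)] S(3) by simp
    have e2: "\<pi> ` S \<subseteq> carrier G" using S(2) hom_in_carrier[OF ph] by auto
    have e3: "finite (\<pi> ` S)" using S(1) by simp
    have "fg_subgroup G {x \<in> carrier G. f x = x}"
      unfolding fg_subgroup_def by (rule exI[of _ "\<pi> ` S"]) (simp only: e1 e2 e3 simp_thms)
    then show False using nfix by contradiction
  qed
  show ?thesis
  proof (rule exI[of _ "Hc G f n"], intro conjI)
    show "\<forall>i\<in>{1..n}. subgroup (Hc G f n i) (DirPow G n) \<and> fg_subgroup (DirPow G n) (Hc G f n i)"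
      using P1 by (rule ballI)
    show "\<forall>I. I \<subseteq> {1..n} \<and> I \<noteq> {} \<and> I \<noteq> {1..n} \<longrightarrow> fg_subgroup (DirPow G n) (\<Inter>i\<in>I. Hc G f n i)"
      using P2 by (intro allI impI)
    show "\<not> fg_subgroup (DirPow G n) (\<Inter>i\<in>{1..n}. Hc G f n i)" by (rule P3)
  qed
qed

end
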